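(* Consider the system of ordinary differential equations \[ \begin{aligned} \frac{dS}{dt} &= \Lambda + \eta R + \theta V - (\beta I + \pi + \mu)S,\\ \frac{dV}{dt} &= \pi S - (\theta + \mu)V,\\ \frac{dE}{dt} &= \beta S I - (\gamma + \mu)E,\\ \frac{dI}{dt} &= \gamma E - (\delta + \tau + \mu)I,\\ \frac{dT}{dt} &= \delta I - (\alpha + \omega + \mu)T,\\ \frac{dR}{dt} &= \alpha T - (\eta + \mu)R, \end{aligned} \] where $\Lambda,\beta,\gamma,\mu,\pi,\eta,\theta,\delta,\tau,\alpha,\omega$ are positive constants. Let \[ \mathscr{E}_0=\left(\frac{\Lambda(\theta+\mu)}{\mu(\theta+\pi+\mu)},\ \frac{\Lambda\pi}{\mu(\theta+\pi+\mu)},\ 0,0,0,0\right) \] be the disease-free equilibrium (in the coordinates $(S,V,E,I,T,R)$) and \[ \mathscr{R}_v=\frac{\Lambda\beta\gamma(\theta+\mu)}{\mu(\delta+\tau+\mu)(\theta+\pi+\mu)(\gamma+\mu)}. \] Then $\mathscr{E}_0$ is locally asymptotically stable if $\mathscr{R}_v<1$ and unstable if $\mathscr{R}_v>1$.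
   Context: SVEITRS model of tuberculosis transmission: $S,V,E,I,T,R$ denote the susceptible, vaccinated, exposed, infectious, treated and recovered populations; all parameters positive. $\mathscr{R}_v$ is called the effective (control) reproduction number. *)

theory Defs
  imports "HOL-Analysis.Analysis"
begin

definition sveitrs ::
  "real \<Rightarrow> real \<Rightarrow> real \<Rightarrow> real \<Rightarrow> real \<Rightarrow> real \<Rightarrow> real \<Rightarrow> real \<Rightarrow> real \<Rightarrow> real \<Rightarrow> real
   \<Rightarrow> real^6 \<Rightarrow> real^6" where
  "sveitrs \<Lambda> \<beta> \<gamma> \<mu> \<pi> \<eta> \<theta> \<delta> \<tau> \<alpha> \<omega> x =
    (let S = x$1; V = x$2; E = x$3; I = x$4; T = x$5; R = x$6 in
     (\<chi> i. if i = 1 then \<Lambda> + \<eta> * R + \<theta> * V - (\<beta> * I + \<pi> + \<mu>) * S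
           else if i = 2 then \<pi> * S - (\<theta> + \<mu>) * V
           else if i = 3 then \<beta> * S * I - (\<gamma> + \<mu>) * E
           else if i = 4 then \<gamma> * E - (\<delta> + \<tau> + \<mu>) * I
           else if i = 5 then \<delta> * I - (\<alpha> + \<omega> + \<mu>) * T
           else \<alpha> * T - (\<eta> + \<mu>) * R))"

definition dfe :: "real \<Rightarrow> real \<Rightarrow> real \<Rightarrow> real \<Rightarrow> real^6" where
  "dfe \<Lambda> \<mu> \<pi> \<theta> =
    (\<chi> i. if i = 1 then \<Lambda> * (\<theta> + \<mu>) / (\<mu> * (\<theta> + \<pi> + \<mu>))
          else if i = 2 then \<Lambda> * \<pi> / (\<mu> * (\<theta> + \<pi> + \<mu>))
          else 0)"

definition Rv :: "real \<Rightarrow> real \<Rightarrow> real \<Rightarrow> real \<Rightarrow> real \<Rightarrow> real \<Rightarrow> real \<Rightarrow> real \<Rightarrow> real" where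
  "Rv \<Lambda> \<beta> \<gamma> \<mu> \<pi> \<theta> \<delta> \<tau> =
    \<Lambda> * \<beta> * \<gamma> * (\<theta> + \<mu>) / (\<mu> * (\<delta> + \<tau> + \<mu>) * (\<theta> + \<pi> + \<mu>) * (\<gamma> + \<mu>))"

text \<open>x is a solution of x' = f(x) on the interval J (one-sided derivatives at endpoints).\<close>
definition ode_solution_on :: "('a::real_normed_vector \<Rightarrow> 'a) \<Rightarrow> (real \<Rightarrow> 'a) \<Rightarrow> real set \<Rightarrow> bool" where
  "ode_solution_on f x J \<longleftrightarrow> (\<forall>t\<in>J. (x has_vector_derivative f (x t)) (at t within J))"

text \<open>Lyapunov stability: every solution starting close to e stays close to e
  for as long as it exists (tested on all compact forward intervals [0,T]).\<close>
definition lyapunov_stable :: "('a::real_normed_vector \<Rightarrow> 'a) \<Rightarrow> 'a \<Rightarrow> bool" where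
  "lyapunov_stable f e \<longleftrightarrow>
     (\<forall>\<epsilon>>0. \<exists>\<delta>>0. \<forall>x T. T \<ge> 0 \<and> ode_solution_on f x {0..T} \<and> dist (x 0) e < \<delta>
        \<longrightarrow> (\<forall>t\<in>{0..T}. dist (x t) e < \<epsilon>))"

definition locally_attractive :: "('a::real_normed_vector \<Rightarrow> 'a) \<Rightarrow> 'a \<Rightarrow> bool" where
  "locally_attractive f e \<longleftrightarrow>
     (\<exists>\<delta>>0. \<forall>x. ode_solution_on f x {0..} \<and> dist (x 0) e < \<delta> \<longrightarrow> (x \<longlongrightarrow> e) at_top)"

definition locally_asymptotically_stable :: "('a::real_normed_vector \<Rightarrow> 'a) \<Rightarrow> 'a \<Rightarrow> bool" where
  "locally_asymptotically_stable f e \<longleftrightarrow> lyapunov_stable f e \<and> locally_attractive f e"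

definition unstable_equilibrium :: "('a::real_normed_vector \<Rightarrow> 'a) \<Rightarrow> 'a \<Rightarrow> bool" where
  "unstable_equilibrium f e \<longleftrightarrow> \<not> lyapunov_stable f e"

end

theory Submission
  imports Defs "HOL-Real_Asymp.Real_Asymp"
begin

lemma exhaust_6:
  fixes x :: 6
  shows "x = 1 \<or> x = 2 \<or> x = 3 \<or> x = 4 \<or> x = 5 \<or> x = 6"
proof (induct x)
  case (of_int z)
  then have "z = 0 \<or> z = 1 \<or> z = 2 \<or> z = 3 \<or> z = 4 \<or> z = 5" by fastforce
  then show ?case by auto
qed

lemma UNIV_6: "(UNIV::6 set) = {1, 2, 3, 4, 5, 6}"
  using exhaust_6 by auto

lemma sum_6: "sum f (UNIV::6 set) = f 1 + f 2 + f 3 + f 4 + f 5 + f 6"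
  unfolding UNIV_6 by (simp add: ac_simps)

lemma norm6_sq: "(norm (x::real^6))^2 = (x$1)^2 + (x$2)^2 + (x$3)^2 + (x$4)^2 + (x$5)^2 + (x$6)^2"
  unfolding norm_vec_def L2_set_def
  by (simp add: sum_6 sum_nonneg)

lemma sv_comp:
  "sveitrs \<Lambda> \<beta> \<gamma> \<mu> \<pi> \<eta> \<theta> \<delta> \<tau> \<alpha> \<omega> x $ 1 = \<Lambda> + \<eta> * x$6 + \<theta> * x$2 - (\<beta> * x$4 + \<pi> + \<mu>) * x$1"
  "sveitrs \<Lambda> \<beta> \<gamma> \<mu> \<pi> \<eta> \<theta> \<delta> \<tau> \<alpha> \<omega> x $ 2 = \<pi> * x$1 - (\<theta> + \<mu>) * x$2"
  "sveitrs \<Lambda> \<beta> \<gamma> \<mu> \<pi> \<eta> \<theta> \<delta> \<tau> \<alpha> \<omega> x $ 3 = \<beta> * x$1 * x$4 - (\<gamma> + \<mu>) * x$3"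
  "sveitrs \<Lambda> \<beta> \<gamma> \<mu> \<pi> \<eta> \<theta> \<delta> \<tau> \<alpha> \<omega> x $ 4 = \<gamma> * x$3 - (\<delta> + \<tau> + \<mu>) * x$4"
  "sveitrs \<Lambda> \<beta> \<gamma> \<mu> \<pi> \<eta> \<theta> \<delta> \<tau> \<alpha> \<omega> x $ 5 = \<delta> * x$4 - (\<alpha> + \<omega> + \<mu>) * x$5"
  "sveitrs \<Lambda> \<beta> \<gamma> \<mu> \<pi> \<eta> \<theta> \<delta> \<tau> \<alpha> \<omega> x $ 6 = \<alpha> * x$5 - (\<eta> + \<mu>) * x$6"
  by (simp_all add: sveitrs_def Let_def)

lemma dfe_comp:
  "dfe \<Lambda> \<mu> \<pi> \<theta> $ 1 = \<Lambda> * (\<theta> + \<mu>) / (\<mu> * (\<theta> + \<pi> + \<mu>))"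
  "dfe \<Lambda> \<mu> \<pi> \<theta> $ 2 = \<Lambda> * \<pi> / (\<mu> * (\<theta> + \<pi> + \<mu>))"
  "dfe \<Lambda> \<mu> \<pi> \<theta> $ 3 = 0" "dfe \<Lambda> \<mu> \<pi> \<theta> $ 4 = 0" "dfe \<Lambda> \<mu> \<pi> \<theta> $ 5 = 0" "dfe \<Lambda> \<mu> \<pi> \<theta> $ 6 = 0"
  by (simp_all add: dfe_def)

lemma ode_exists:
  fixes g :: "'a::euclidean_space \<Rightarrow> 'a"
  assumes lip: "\<And>x y. norm (g x - g y) \<le> L * norm (x - y)" and L0: "L \<ge> 0" and T0: "T \<ge> 0"
  shows "\<exists>x. x 0 = x0 \<and> (\<forall>t\<in>{0..T}. (x has_vector_derivative g (x t)) (at t within {0..T}))"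
proof -
  define K where "K = 2*L + 1"
  have K0: "K > 0" using L0 by (simp add: K_def)
  have gcont: "continuous_on UNIV g"
    by (rule lipschitz_on_continuous_on[of L]) (auto intro!: lipschitz_onI simp: dist_norm lip L0)
  define G where "G = (\<lambda>(z::(real, 'a) bcontfun) s. g (exp (K * s) *\<^sub>R apply_bcontfun z s))"
  have Gcont: "continuous_on A (G z)" for z A
    unfolding G_def by (intro continuous_on_compose2[OF gcont] continuous_intros continuous_on_apply_bcontfun) auto
  have Gint: "G z integrable_on {0..t}" for z t
    by (rule integrable_continuous_interval[OF Gcont])
  define F where "F = (\<lambda>z t. exp (-(K * t)) *\<^sub>R (x0 + integral {0..t} (G z)))"
  have Fcont: "continuous_on {0..T} (F z)" for z
    unfolding F_def by (intro continuous_intros indefinite_integral_continuous_1 Gint)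
  have exQ: "\<exists>w. \<forall>t. apply_bcontfun w t = F z (clamp 0 T t)" for z
  proof -
    obtain w :: "(real, 'a) bcontfun" where "\<And>t. w t = F z (clamp 0 T t)"
      using continuous_on_cbox_bcontfunE[of 0 T "F z"] Fcont[of z] unfolding cbox_interval by metis
    then show ?thesis by blast
  qed
  define Q where "Q z = (SOME w. \<forall>t. apply_bcontfun w t = F z (clamp 0 T t))" for z
  have Q: "apply_bcontfun (Q z) t = F z (clamp 0 T t)" for z t
    using someI_ex[OF exQ[of z]] unfolding Q_def by blast
  have clampT: "clamp 0 T t = t" if "t \<in> {0..T}" for t :: real
    using clamp_cancel_cbox[of t 0 T] that by (simp add: cbox_interval)
  have clampin: "clamp 0 T t \<in> {0..T}" for t :: real
    using clamp_in_interval[of 0 T t] T0 by (simp add: cbox_interval)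
  have expint: "((\<lambda>s. exp (K * s)) has_integral (exp (K * c) - 1)/K) {0..c}" if "c \<ge> 0" for c
  proof -
    have "((\<lambda>s. exp (K * s)) has_integral ((\<lambda>s. exp (K * s)/K) c - (\<lambda>s. exp (K * s)/K) 0)) {0..c}"
    proof (rule fundamental_theorem_of_calculus[OF that])
      fix s assume "s \<in> {0..c}"
      have "((\<lambda>s. exp (K * s)/K) has_real_derivative exp (K * s)) (at s within {0..c})"
        using K0 by (auto intro!: derivative_eq_intros)
      then show "((\<lambda>s. exp (K * s)/K) has_vector_derivative exp (K * s)) (at s within {0..c})"
        by (simp add: has_real_derivative_iff_has_vector_derivative)
    qed
    then show ?thesis by (simp add: diff_divide_distrib)
  qed
  have contr: "dist (Q z) (Q w) \<le> 1/2 * dist z w" for z w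
  proof (rule dist_bound)
    fix t
    define c where "c = clamp 0 T t"
    have c: "0 \<le> c" "c \<le> T" using clampin[of t] by (auto simp: c_def)
    define D where "D = dist z w"
    have D0: "D \<ge> 0" by (simp add: D_def)
    have diff: "F z c - F w c = exp (-(K * c)) *\<^sub>R integral {0..c} (\<lambda>s. G z s - G w s)"
      by (simp add: F_def integral_diff[OF Gint Gint] scaleR_diff_right scaleR_add_right)
    have "norm (integral {0..c} (\<lambda>s. G z s - G w s)) \<le> integral {0..c} (\<lambda>s. L*D*exp (K * s))"
    proof (rule integral_norm_bound_integral)
      show "(\<lambda>s. G z s - G w s) integrable_on {0..c}" by (intro integrable_diff Gint)
      show "(\<lambda>s. L*D*exp (K * s)) integrable_on {0..c}"
        by (intro integrable_continuous_interval continuous_intros)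
      fix s assume "s \<in> {0..c}"
      have "norm (G z s - G w s) \<le> L * norm (exp (K * s) *\<^sub>R z s - exp (K * s) *\<^sub>R w s)"
        unfolding G_def using lip by simp
      also have "... = L * exp (K * s) * dist (z s) (w s)"
        by (simp add: dist_norm flip: scaleR_diff_right)
      also have "... \<le> L * exp (K * s) * D"
        using dist_bounded[of z s w] L0 by (simp add: D_def mult_left_mono)
      finally show "norm (G z s - G w s) \<le> L*D*exp (K * s)" by (simp add: mult_ac)
    qed
    also have "... = L*D*((exp (K * c) - 1)/K)"
      by (rule integral_unique) (use has_integral_mult_right[OF expint[OF c(1)], of "L*D"] in simp)
    finally have I: "norm (integral {0..c} (\<lambda>s. G z s - G w s)) \<le> L*D*((exp (K * c) - 1)/K)" .
    have "dist (Q z t) (Q w t) = exp (-(K * c)) * norm (integral {0..c} (\<lambda>s. G z s - G w s))"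
      by (simp add: Q c_def[symmetric] dist_norm diff)
    also have "... \<le> exp (-(K * c)) * (L*D*((exp (K * c) - 1)/K))"
      by (rule mult_left_mono[OF I]) simp
    also have "... = L*D*(exp (-(K * c)) * exp (K * c) - exp (-(K * c)))/K"
      by (simp add: algebra_simps)
    also have "... = L*D*(1 - exp (-(K * c)))/K"
      by (simp add: exp_minus_inverse mult.commute[of "exp (-(K * c))"])
    also have "... \<le> L*D/K"
      using K0 L0 D0 by (intro divide_right_mono mult_left_le) auto
    also have "... \<le> 1/2 * D"
      using K0 D0 by (simp add: pos_divide_le_eq K_def algebra_simps)
    finally show "dist (Q z t) (Q w t) \<le> 1/2 * dist z w" by (simp add: D_def)
  qed
  obtain z where z: "Q z = z"
    using banach_fix_type[of "1/2" Q] contr by auto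
  define x where "x t = exp (K * t) *\<^sub>R apply_bcontfun z t" for t
  have Gx: "G z = (\<lambda>s. g (x s))" by (simp add: G_def x_def fun_eq_iff)
  have xeq: "x t = x0 + integral {0..t} (\<lambda>s. g (x s))" if "t \<in> {0..T}" for t
  proof -
    have "apply_bcontfun z t = F z t" using Q[of z t] z clampT[OF that] by simp
    then have "x t = (exp (K * t) * exp (-(K * t))) *\<^sub>R (x0 + integral {0..t} (G z))"
      by (simp add: x_def F_def)
    then show ?thesis by (simp add: exp_minus_inverse Gx)
  qed
  have xcont: "continuous_on {0..T} (\<lambda>s. g (x s))"
    unfolding x_def by (intro continuous_on_compose2[OF gcont] continuous_intros continuous_on_apply_bcontfun) auto
  show ?thesis
  proof (intro exI conjI ballI)
    show "x 0 = x0" using xeq[of 0] T0 by simp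
    fix t assume t: "t \<in> {0..T}"
    have "((\<lambda>u. x0 + integral {0..u} (\<lambda>s. g (x s))) has_vector_derivative 0 + g (x t)) (at t within {0..T})"
      by (rule has_vector_derivative_add[OF has_vector_derivative_const integral_has_vector_derivative[OF xcont t]])
    then have "((\<lambda>u. x0 + integral {0..u} (\<lambda>s. g (x s))) has_vector_derivative g (x t)) (at t within {0..T})"
      by simp
    then show "(x has_vector_derivative g (x t)) (at t within {0..T})"
    proof (rule has_vector_derivative_transform_within[of _ _ _ _ 1])
      fix x' assume "x' \<in> {0..T}"
      then show "x0 + integral {0..x'} (\<lambda>s. g (x s)) = x x'" by (simp only: xeq)
    qed (use t in auto)
  qed
qed

lemma amgm:
  fixes x y p q :: real
  assumes "p > 0" "1 \<le> 4*p*q"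
  shows "x*y \<le> p*x^2 + q*y^2"
proof -
  have e: "p*x^2 + q*y^2 - x*y = p*(x - y/(2*p))^2 + (q - 1/(4*p))*y^2"
    using assms(1) by (simp add: field_simps power2_eq_square)
  have "q - 1/(4*p) \<ge> 0" using assms by (simp add: field_simps)
  then have "p*(x - y/(2*p))^2 + (q - 1/(4*p))*y^2 \<ge> 0"
    using assms(1) by (intro add_nonneg_nonneg mult_nonneg_nonneg) auto
  then show ?thesis using e by linarith
qed

lemma absprod: "\<bar>E*I\<bar> \<le> (E^2 + I^2)/2" for E I :: real
proof -
  have "\<bar>E\<bar>*\<bar>I\<bar> \<le> (1/2)*\<bar>E\<bar>^2 + (1/2)*\<bar>I\<bar>^2" by (rule amgm) auto
  then show ?thesis by (simp add: abs_mult)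
qed

lemma inst_alg:
  fixes a b c \<gamma> \<beta> :: real
  assumes pos: "a>0" "b>0" "c>0" "\<gamma>>0" "\<beta>>0" and RR: "a*c < b*\<gamma>"
  shows "\<exists>x z r \<kappa> C. x > 0 \<and> r > 0 \<and> \<kappa> > 0 \<and> C > 0 \<and>
    (\<forall>s E I. \<bar>s\<bar> \<le> r \<longrightarrow>
       (let Wd = 2*x*E*(b*I + \<beta>* s*I - a*E) + 2*((b*I + \<beta>* s*I - a*E)*I + E*(\<gamma>*E - c*I)) + 2*z*I*(\<gamma>*E - c*I)
        in 0 \<le> Wd \<and> \<kappa>*(x*E^2 + 2*E*I + z*I^2) \<le> Wd)) \<and>
    (\<forall>E I. x*E^2 + 2*E*I + z*I^2 \<le> C*(E^2+I^2))"
proof -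
  define L0 where "L0 = (c*(a+c) - b*\<gamma>)/(b*c)"
  have h: "(a+c)*(a*c - b*\<gamma>) < 0" using pos RR by (intro mult_pos_neg) auto
  have "L0 < \<gamma>/a" using h pos by (simp add: L0_def field_simps)
  moreover have "0 < \<gamma>/a" using pos by simp
  ultimately have "max 0 L0 < \<gamma>/a" by simp
  then obtain x where x: "max 0 L0 < x" "x < \<gamma>/a" using dense by blast
  define z where "z = (a + c - b*x)/\<gamma>"
  define \<sigma> where "\<sigma> = \<gamma> - a*x"
  define \<sigma>' where "\<sigma>' = b - c*z"
  have x0: "x > 0" using x by simp
  have s1: "\<sigma> > 0" using x(2) pos by (simp add: \<sigma>_def field_simps)
  have "L0 < x" using x by simp
  then have "c*(a+c) - b*\<gamma> < x*(b*c)" using pos by (simp add: L0_def field_simps)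
  then have s2: "\<sigma>' > 0" using pos by (simp add: \<sigma>'_def z_def field_simps)
  define \<mu>0 where "\<mu>0 = min \<sigma> \<sigma>' / 2"
  have m0: "\<mu>0 > 0" using s1 s2 by (simp add: \<mu>0_def)
  define r where "r = \<mu>0/(\<beta>*(x+1))"
  have r0: "r > 0" using m0 pos x0 by (simp add: r_def)
  define C where "C = x + 1 + \<bar>z\<bar>"
  have C0: "C > 0" using x0 by (simp add: C_def)
  define \<kappa> where "\<kappa> = 2*\<mu>0/C"
  have k0: "\<kappa> > 0" using m0 C0 by (simp add: \<kappa>_def)
  have Wb: "x*E^2 + 2*E*I + z*I^2 \<le> C*(E^2+I^2)" for E I
  proof -
    have "2*E*I \<le> E^2 + I^2" using absprod[of E I] by (simp add: abs_le_iff)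
    moreover have "z*I^2 \<le> \<bar>z\<bar>*I^2" by (simp add: mult_right_mono)
    moreover have "0 \<le> \<bar>z\<bar>*E^2 + x*I^2" using x0 by simp
    ultimately show ?thesis by (simp add: C_def algebra_simps)
  qed
  have Wd: "0 \<le> Wd \<and> \<kappa>*(x*E^2 + 2*E*I + z*I^2) \<le> Wd"
    if sr: "\<bar>s\<bar> \<le> r" and Wd_def: "Wd = 2*x*E*(b*I + \<beta>* s*I - a*E) + 2*((b*I + \<beta>* s*I - a*E)*I + E*(\<gamma>*E - c*I)) + 2*z*I*(\<gamma>*E - c*I)"
    for s E I Wd
  proof -
    have id: "Wd = 2*(\<sigma>*E^2 + \<sigma>'*I^2 + \<beta>* s*(x*(E*I) + I^2))"
      using pos by (simp add: Wd_def \<sigma>_def \<sigma>'_def z_def field_simps power2_eq_square)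
    have "\<bar>\<beta>* s*(x*(E*I) + I^2)\<bar> \<le> \<beta>*r*(x*\<bar>E*I\<bar> + I^2)"
    proof -
      have "\<bar>\<beta>* s*(x*(E*I) + I^2)\<bar> = \<beta>*\<bar>s\<bar>*\<bar>x*(E*I) + I^2\<bar>" using pos by (simp add: abs_mult)
      also have "\<bar>x*(E*I) + I^2\<bar> \<le> x*\<bar>E*I\<bar> + I^2" using x0
        by (metis abs_mult abs_of_pos abs_triangle_ineq abs_power2)
      then have "\<beta>*\<bar>s\<bar>*\<bar>x*(E*I) + I^2\<bar> \<le> \<beta>*r*(x*\<bar>E*I\<bar> + I^2)"
        using sr pos by (intro mult_mono) auto
      finally show ?thesis .
    qed
    also have "... \<le> \<beta>*r*((x+1)*(E^2+I^2))"
    proof -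
      have "x*\<bar>E*I\<bar> \<le> x*((E^2+I^2)/2)" using x0 absprod[of E I] by (simp add: mult_left_mono)
      moreover have "x*((E^2+I^2)/2) = x*E^2/2 + x*I^2/2" by (simp add: algebra_simps)
      moreover have "(x+1)*(E^2+I^2) = x*E^2 + x*I^2 + E^2 + I^2" by (simp add: algebra_simps)
      moreover have "0 \<le> x*E^2" "0 \<le> x*I^2" "0 \<le> E^2" using x0 by auto
      ultimately have "x*\<bar>E*I\<bar> + I^2 \<le> (x+1)*(E^2+I^2)" by linarith
      then show ?thesis using pos r0 by (simp add: mult_left_mono)
    qed
    also have "... = \<mu>0*(E^2+I^2)" using pos x0 by (simp add: r_def)
    finally have nl: "\<beta>* s*(x*(E*I) + I^2) \<ge> -(\<mu>0*(E^2+I^2))" by (simp add: abs_le_iff)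
    have "\<sigma>*E^2 \<ge> (2*\<mu>0)*E^2" by (rule mult_right_mono) (auto simp: \<mu>0_def)
    moreover have "\<sigma>'*I^2 \<ge> (2*\<mu>0)*I^2" by (rule mult_right_mono) (auto simp: \<mu>0_def)
    ultimately have low: "Wd \<ge> 2*\<mu>0*(E^2+I^2)" using nl by (simp add: id algebra_simps)
    have "\<kappa>*(x*E^2 + 2*E*I + z*I^2) \<le> \<kappa>*(C*(E^2+I^2))" using k0 Wb by (simp add: mult_left_mono)
    also have "... = 2*\<mu>0*(E^2+I^2)" using C0 by (simp add: \<kappa>_def)
    finally show ?thesis using low m0 by (auto intro: order_trans[rotated])
  qed
  show ?thesis
    by (rule exI[of _ x], rule exI[of _ z], rule exI[of _ r], rule exI[of _ \<kappa>], rule exI[of _ C])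
       (use x0 r0 k0 C0 Wb Wd in \<open>simp add: Let_def\<close>)
qed

lemma stab_alg:
  fixes a b c d m \<gamma> \<beta> \<eta> \<pi> \<theta> \<mu> \<delta> \<alpha> :: real
  assumes pos: "a>0" "b>0" "c>0" "d>0" "m>0" "\<gamma>>0" "\<beta>>0" "\<eta>>0" "\<pi>>0" "\<theta>>0" "\<mu>>0" "\<delta>>0" "\<alpha>>0"
    and RR: "b*\<gamma> < a*c"
  shows "\<exists>A B C r \<kappa>. A>0 \<and> B>0 \<and> C>0 \<and> r>0 \<and> \<kappa>>0 \<and>
    (\<forall>s v E I T R. \<bar>s\<bar> \<le> r \<longrightarrow> \<bar>I\<bar> \<le> r \<longrightarrow>
      A*(\<gamma>*E*(b*I + \<beta> * s*I - a*E) + b*I*(\<gamma>*E - c*I)) + B*(T*(\<delta>*I - d*T)) + C*(R*(\<alpha>*T - m*R))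
      + (\<pi> * s*(\<eta>*R + \<theta>* v - (\<pi>+\<mu>) * s - b*I - \<beta> * s*I) + \<theta>* v *(\<pi> * s - (\<theta>+\<mu>)* v))
      \<le> -\<kappa>*(s^2+v^2+E^2+I^2+T^2+R^2))"
proof -
  have "\<gamma>/c < a/b" using RR pos by (simp add: field_simps)
  then obtain t0 where t0: "\<gamma>/c < t0" "t0 < a/b" using dense by blast
  have t00: "t0 > 0" using t0 pos by (smt (verit) divide_pos_pos)
  define k1 where "k1 = \<gamma>*(a - b*t0)"
  define k2 where "k2 = b*(c - \<gamma>/t0)"
  have k1: "k1 > 0" using t0 pos by (simp add: k1_def field_simps)
  have k2: "k2 > 0" using t0 pos t00 by (simp add: k2_def field_simps)
  define C where "C = 2*(\<pi>*\<eta>^2/\<mu> + 1)/m"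
  define B where "B = 2*(C*\<alpha>^2/(2*m) + 1)/d"
  define A where "A = 2*(\<pi>*b^2/\<mu> + B*\<delta>^2/(2*d) + 1)/k2"
  have C0: "C > 0" using pos unfolding C_def by (intro divide_pos_pos mult_pos_pos add_nonneg_pos) auto
  have B0: "B > 0" using pos C0 unfolding B_def by (intro divide_pos_pos mult_pos_pos add_nonneg_pos) auto
  have A0: "A > 0" using pos B0 k2 unfolding A_def by (intro divide_pos_pos mult_pos_pos add_nonneg_pos add_nonneg_nonneg) auto
  define r where "r = min (k1/(\<gamma>*\<beta>)) (min (k2/(\<gamma>*\<beta>)) (\<mu>/(4*\<beta>)))"
  have r0: "r > 0" using k1 k2 pos by (simp add: r_def)
  define \<kappa> where "\<kappa> = min (min (A*k1/2) 1) (min (\<pi>*\<mu>/4) (\<theta>*\<mu>))"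
  have \<kappa>0: "\<kappa> > 0" using A0 k1 pos by (simp add: \<kappa>_def)
  have main: "A*(\<gamma>*E*(b*I + \<beta> * s*I - a*E) + b*I*(\<gamma>*E - c*I)) + B*(T*(\<delta>*I - d*T)) + C*(R*(\<alpha>*T - m*R))
      + (\<pi> * s*(\<eta>*R + \<theta>* v - (\<pi>+\<mu>) * s - b*I - \<beta> * s*I) + \<theta>* v *(\<pi> * s - (\<theta>+\<mu>)* v))
      \<le> -\<kappa>*(s^2+v^2+E^2+I^2+T^2+R^2)"
    if sr: "\<bar>s\<bar> \<le> r" and Ir: "\<bar>I\<bar> \<le> r" for s v E I T R
  proof -
    have h1: "\<gamma>*E*(b*I + \<beta> * s*I - a*E) + b*I*(\<gamma>*E - c*I) \<le> -(k1/2)*E^2 - (k2/2)*I^2"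
    proof -
      have am: "E*I \<le> (t0/2)*E^2 + (1/(2*t0))*I^2" by (rule amgm) (use t00 in auto)
      have nl: "\<gamma>*\<beta>* s*(E*I) \<le> (k1/2)*E^2 + (k2/2)*I^2"
      proof -
        have "\<gamma>*\<beta>* s*(E*I) \<le> \<gamma>*\<beta>*\<bar>s\<bar>*\<bar>E*I\<bar>" using pos abs_ge_self[of "\<gamma>*\<beta>* s*(E*I)"] by (simp add: abs_mult)
        also have "... \<le> \<gamma>*\<beta>*r*((E^2+I^2)/2)"
          using pos sr absprod[of E I] by (intro mult_mono mult_left_mono) auto
        also have "... = (\<gamma>*\<beta>*r)*E^2/2 + (\<gamma>*\<beta>*r)*I^2/2" by (simp add: algebra_simps)
        also have "... \<le> k1*E^2/2 + k2*I^2/2"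
        proof -
          have "r \<le> k1/(\<gamma>*\<beta>)" "r \<le> k2/(\<gamma>*\<beta>)" by (simp_all add: r_def)
          then have "r*(\<gamma>*\<beta>) \<le> k1" "r*(\<gamma>*\<beta>) \<le> k2" using pos by (simp_all add: pos_le_divide_eq)
          then have "\<gamma>*\<beta>*r \<le> k1" "\<gamma>*\<beta>*r \<le> k2" by (simp_all add: mult_ac)
          then have "(\<gamma>*\<beta>*r)*E^2 \<le> k1*E^2" "(\<gamma>*\<beta>*r)*I^2 \<le> k2*I^2" by (auto intro: mult_right_mono)
          then show ?thesis by simp
        qed
        finally show ?thesis by simp
      qed
      have "\<gamma>*E*(b*I + \<beta> * s*I - a*E) + b*I*(\<gamma>*E - c*I) = -(a*\<gamma>)*E^2 - (b*c)*I^2 + (2*b*\<gamma>)*(E*I) + \<gamma>*\<beta>* s*(E*I)"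
        by (simp add: algebra_simps power2_eq_square)
      also have "... \<le> -(a*\<gamma>)*E^2 - (b*c)*I^2 + (2*b*\<gamma>)*((t0/2)*E^2 + (1/(2*t0))*I^2) + ((k1/2)*E^2 + (k2/2)*I^2)"
        using am nl pos by (intro add_mono diff_mono order_refl mult_left_mono) auto
      also have "... = -(k1/2)*E^2 - (k2/2)*I^2"
        using t00 by (simp add: k1_def k2_def field_simps)
      finally show ?thesis .
    qed
    have h2: "T*(\<delta>*I - d*T) \<le> -(d/2)*T^2 + (\<delta>^2/(2*d))*I^2"
    proof -
      have "T*(\<delta>*I) \<le> (d/2)*T^2 + (1/(2*d))*(\<delta>*I)^2" by (rule amgm) (use pos in auto)
      then show ?thesis by (simp add: algebra_simps power2_eq_square)
    qed
    have h3: "R*(\<alpha>*T - m*R) \<le> -(m/2)*R^2 + (\<alpha>^2/(2*m))*T^2"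
    proof -
      have "R*(\<alpha>*T) \<le> (m/2)*R^2 + (1/(2*m))*(\<alpha>*T)^2" by (rule amgm) (use pos in auto)
      then show ?thesis by (simp add: algebra_simps power2_eq_square)
    qed
    have h4: "\<pi> * s*(\<eta>*R + \<theta>* v - (\<pi>+\<mu>) * s - b*I - \<beta> * s*I) + \<theta>* v *(\<pi> * s - (\<theta>+\<mu>)* v)
        \<le> -(\<pi>*\<mu>/4)* s^2 - (\<theta>*\<mu>)* v^2 + (\<pi>*b^2/\<mu>)*I^2 + (\<pi>*\<eta>^2/\<mu>)*R^2"
    proof -
      have a1: "s*(-(b*I)) \<le> (\<mu>/4)* s^2 + (1/\<mu>)*(-(b*I))^2" by (rule amgm) (use pos in auto)
      have a2: "s*(\<eta>*R) \<le> (\<mu>/4)* s^2 + (1/\<mu>)*(\<eta>*R)^2" by (rule amgm) (use pos in auto)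
      have a3: "-(\<beta>* s^2*I) \<le> (\<mu>/4)* s^2"
      proof -
        have "\<beta>* s^2*(-I) \<le> \<beta>* s^2*\<bar>I\<bar>" using pos by (intro mult_left_mono) auto
        then have "-(\<beta>* s^2*I) \<le> \<beta>* s^2*\<bar>I\<bar>" by simp
        also have "... \<le> \<beta>* s^2*r" using pos Ir by (intro mult_left_mono) auto
        also have "... \<le> \<beta>* s^2*(\<mu>/(4*\<beta>))" using pos by (intro mult_left_mono) (auto simp: r_def)
        also have "... = (\<mu>/4)* s^2" using pos by simp
        finally show ?thesis .
      qed
      have sq: "0 \<le> (\<pi> * s - \<theta>* v)^2" by simp
      have "\<pi> * s*(\<eta>*R + \<theta>* v - (\<pi>+\<mu>) * s - b*I - \<beta> * s*I) + \<theta>* v *(\<pi> * s - (\<theta>+\<mu>)* v)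
          = -((\<pi> * s - \<theta>* v)^2) - (\<pi>*\<mu>)* s^2 - (\<theta>*\<mu>)* v^2 + \<pi>*(s*(-(b*I))) + \<pi>*(s*(\<eta>*R)) + \<pi>*(-(\<beta>* s^2*I))"
        by (simp add: algebra_simps power2_eq_square)
      also have "... \<le> 0 - (\<pi>*\<mu>)* s^2 - (\<theta>*\<mu>)* v^2 + \<pi>*((\<mu>/4)* s^2 + (1/\<mu>)*(-(b*I))^2)
            + \<pi>*((\<mu>/4)* s^2 + (1/\<mu>)*(\<eta>*R)^2) + \<pi>*((\<mu>/4)* s^2)"
        using a1 a2 a3 sq pos by (intro add_mono diff_mono order_refl mult_left_mono) auto
      also have "... = -(\<pi>*\<mu>/4)* s^2 - (\<theta>*\<mu>)* v^2 + (\<pi>*b^2/\<mu>)*I^2 + (\<pi>*\<eta>^2/\<mu>)*R^2"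
        using pos by (simp add: field_simps power2_eq_square)
      finally show ?thesis .
    qed
    have "A*(\<gamma>*E*(b*I + \<beta> * s*I - a*E) + b*I*(\<gamma>*E - c*I)) + B*(T*(\<delta>*I - d*T)) + C*(R*(\<alpha>*T - m*R))
      + (\<pi> * s*(\<eta>*R + \<theta>* v - (\<pi>+\<mu>) * s - b*I - \<beta> * s*I) + \<theta>* v *(\<pi> * s - (\<theta>+\<mu>)* v))
      \<le> A*(-(k1/2)*E^2 - (k2/2)*I^2) + B*(-(d/2)*T^2 + (\<delta>^2/(2*d))*I^2) + C*(-(m/2)*R^2 + (\<alpha>^2/(2*m))*T^2)
        + (-(\<pi>*\<mu>/4)* s^2 - (\<theta>*\<mu>)* v^2 + (\<pi>*b^2/\<mu>)*I^2 + (\<pi>*\<eta>^2/\<mu>)*R^2)"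
    proof -
      have "A*(\<gamma>*E*(b*I + \<beta> * s*I - a*E) + b*I*(\<gamma>*E - c*I)) \<le> A*(-(k1/2)*E^2 - (k2/2)*I^2)"
        using h1 A0 by (intro mult_left_mono) auto
      moreover have "B*(T*(\<delta>*I - d*T)) \<le> B*(-(d/2)*T^2 + (\<delta>^2/(2*d))*I^2)"
        using h2 B0 by (intro mult_left_mono) auto
      moreover have "C*(R*(\<alpha>*T - m*R)) \<le> C*(-(m/2)*R^2 + (\<alpha>^2/(2*m))*T^2)"
        using h3 C0 by (intro mult_left_mono) auto
      ultimately show ?thesis using h4 by linarith
    qed
    also have "... = -(A*k1/2)*E^2 - I^2 - T^2 - R^2 - (\<pi>*\<mu>/4)* s^2 - (\<theta>*\<mu>)* v^2"
      using pos k2 by (simp add: A_def B_def C_def field_simps)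
    also have "... \<le> -\<kappa>*E^2 - \<kappa>*I^2 - \<kappa>*T^2 - \<kappa>*R^2 - \<kappa>* s^2 - \<kappa>* v^2"
    proof -
      have "\<kappa> \<le> A*k1/2" "\<kappa> \<le> 1" "\<kappa> \<le> \<pi>*\<mu>/4" "\<kappa> \<le> \<theta>*\<mu>" by (auto simp: \<kappa>_def)
      then have "\<kappa>*E^2 \<le> (A*k1/2)*E^2" "\<kappa>*I^2 \<le> 1*I^2" "\<kappa>*T^2 \<le> 1*T^2" "\<kappa>*R^2 \<le> 1*R^2"
          "\<kappa>* s^2 \<le> (\<pi>*\<mu>/4)* s^2" "\<kappa>* v^2 \<le> (\<theta>*\<mu>)* v^2"
        by (meson mult_right_mono zero_le_power2)+
      then show ?thesis by linarith
    qed
    also have "... = -\<kappa>*(s^2+v^2+E^2+I^2+T^2+R^2)" by (simp add: algebra_simps)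
    finally show ?thesis .
  qed
  show ?thesis
    by (rule exI[of _ A], rule exI[of _ B], rule exI[of _ C], rule exI[of _ r], rule exI[of _ \<kappa>])
       (use A0 B0 C0 r0 \<kappa>0 main in auto)
qed

lemma comp_deriv:
  fixes x :: "real \<Rightarrow> real^'n"
  assumes "(x has_vector_derivative x') (at t within J)"
  shows "((\<lambda>t. x t $ i) has_real_derivative x' $ i) (at t within J)"
proof -
  have "((\<lambda>t. x t $ i) has_derivative (\<lambda>h. (h *\<^sub>R x') $ i)) (at t within J)"
    using bounded_linear.has_derivative[OF bounded_linear_vec_nth assms[unfolded has_vector_derivative_def]] .
  moreover have "(\<lambda>h. (h *\<^sub>R x') $ i) = (*) (x' $ i)" by (auto simp: fun_eq_iff)
  ultimately show ?thesis by (simp add: has_field_derivative_def)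
qed

lemma deriv_cont_on:
  fixes h :: "real \<Rightarrow> real"
  assumes "\<And>t. t \<in> J \<Longrightarrow> (h has_real_derivative h' t) (at t within J)"
  shows "continuous_on J h"
  unfolding continuous_on_eq_continuous_within using assms by (blast intro: DERIV_continuous)

lemma mono_deriv:
  fixes h :: "real \<Rightarrow> real"
  assumes ab: "a \<le> b" and d: "\<And>t. t \<in> {a..b} \<Longrightarrow> (h has_real_derivative h' t) (at t within {a..b})"
    and nn: "\<And>t. t \<in> {a..b} \<Longrightarrow> h' t \<ge> 0"
  shows "h a \<le> h b"
proof (rule DERIV_nonneg_imp_increasing_open[OF ab])
  fix t assume t: "a < t" "t < b"
  then have "at t within {a..b} = at t" by (intro at_within_interior) auto
  then show "\<exists>y. DERIV h t :> y \<and> y \<ge> 0" using d[of t] nn[of t] t by auto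
next
  show "continuous_on {a..b} h" by (rule deriv_cont_on[OF d])
qed

lemma stay_in:
  fixes \<phi> :: "real \<Rightarrow> real"
  assumes c: "continuous_on {0..T} \<phi>" and p0: "\<phi> 0 < L"
    and step: "\<And>t. t \<in> {0..T} \<Longrightarrow> (\<forall>s\<in>{0..t}. \<phi> s \<le> L) \<Longrightarrow> \<phi> t < L"
  shows "\<forall>t\<in>{0..T}. \<phi> t < L"
proof (rule ccontr)
  assume neg: "\<not> (\<forall>t\<in>{0..T}. \<phi> t < L)"
  define K where "K = {0..T} \<inter> \<phi> -` {L..}"
  have cl: "closed K" unfolding K_def
    using continuous_closed_preimage[OF c closed_atLeastAtMost[of 0 T] closed_atLeast[of L]] .
  have bd: "bounded K" unfolding K_def
    by (rule bounded_subset[of "{0..T}"]) (simp, blast)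
  have cp: "compact K" using cl bd by (simp add: compact_eq_bounded_closed)
  obtain t0 where t0: "t0 \<in> {0..T}" "\<not> \<phi> t0 < L" using neg by blast
  then have "t0 \<in> K" by (simp add: K_def)
  then have ne: "K \<noteq> {}" by blast
  obtain t1 where t1: "t1 \<in> K" "\<And>s. s \<in> K \<Longrightarrow> t1 \<le> s"
    using compact_attains_inf[OF cp ne] by blast
  have t1T: "t1 \<in> {0..T}" and pt1: "\<phi> t1 \<ge> L" using t1(1) unfolding K_def by auto
  have below: "\<phi> s < L" if "s \<in> {0..T}" "s < t1" for s
  proof (rule ccontr)
    assume "\<not> \<phi> s < L"
    then have "s \<in> K" using that by (simp add: K_def)
    then show False using t1(2)[of s] that by simp
  qed
  have "\<phi> t1 \<le> L"
  proof (rule ccontr)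
    assume nt: "\<not> \<phi> t1 \<le> L"
    have "0 \<le> t1" using t1T by simp
    moreover have "continuous_on {0..t1} \<phi>" using c by (rule continuous_on_subset) (use t1T in auto)
    ultimately obtain s where s: "0 \<le> s" "s \<le> t1" "\<phi> s = L"
      using IVT'[of \<phi> 0 L t1] p0 nt by force
    have "s \<noteq> t1" using s nt by auto
    then show False using below[of s] s t1T by auto
  qed
  have "\<forall>s\<in>{0..t1}. \<phi> s \<le> L"
  proof
    fix s assume "s \<in> {0..t1}"
    then show "\<phi> s \<le> L" using below[of s] t1T \<open>\<phi> t1 \<le> L\<close> by (cases "s = t1") auto
  qed
  then have "\<phi> t1 < L" using step t1T by blast
  then show False using pt1 by simp
qed

lemma abs_lin: "\<bar>X\<bar> \<le> D \<Longrightarrow> 0 \<le> p \<Longrightarrow> \<bar>p*X\<bar> \<le> p*D" for X D p :: real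
  by (simp add: abs_mult mult_left_mono)

lemma abs4: "\<bar>A + B - C - E\<bar> \<le> \<bar>A\<bar> + \<bar>B\<bar> + \<bar>C\<bar> + \<bar>E\<bar>" for A B C E :: real
  using abs_triangle_ineq4[of "A+B-C" E] abs_triangle_ineq4[of "A+B" C] abs_triangle_ineq[of A B] by linarith

lemma abs2: "\<bar>A - B\<bar> \<le> \<bar>A\<bar> + \<bar>B\<bar>" for A B :: real
  by (rule abs_triangle_ineq4)

locale sv =
  fixes \<Lambda> \<beta> \<gamma> \<mu> \<pi> \<eta> \<theta> \<delta> \<tau> \<alpha> \<omega> :: real
  assumes pos: "\<Lambda> > 0" "\<beta> > 0" "\<gamma> > 0" "\<mu> > 0" "\<pi> > 0" "\<eta> > 0" "\<theta> > 0"
          "\<delta> > 0" "\<tau> > 0" "\<alpha> > 0" "\<omega> > 0"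
begin

definition "f = sveitrs \<Lambda> \<beta> \<gamma> \<mu> \<pi> \<eta> \<theta> \<delta> \<tau> \<alpha> \<omega>"
definition "e = dfe \<Lambda> \<mu> \<pi> \<theta>"
definition "S0 = \<Lambda> * (\<theta> + \<mu>) / (\<mu> * (\<theta> + \<pi> + \<mu>))"
definition "V0 = \<Lambda> * \<pi> / (\<mu> * (\<theta> + \<pi> + \<mu>))"
definition "b = \<beta> * S0"

lemma S0_pos: "S0 > 0" and V0_pos: "V0 > 0" and b_pos: "b > 0"
  using pos by (simp_all add: S0_def V0_def b_def)

lemma e_comp: "e$1 = S0" "e$2 = V0" "e$3 = 0" "e$4 = 0" "e$5 = 0" "e$6 = 0"
  by (simp_all add: e_def dfe_comp S0_def V0_def)

lemma eq1: "\<Lambda> + \<theta>*V0 - (\<pi>+\<mu>)*S0 = 0"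
proof -
  define D where "D = \<mu> * (\<theta> + \<pi> + \<mu>)"
  have D: "D \<noteq> 0" using pos by (simp add: D_def)
  have "\<Lambda> + \<theta>*V0 - (\<pi>+\<mu>)*S0 = (\<Lambda>*D + \<theta>*(\<Lambda>*\<pi>) - (\<pi>+\<mu>)*(\<Lambda>*(\<theta>+\<mu>)))/D"
  proof -
    have SV: "S0 = \<Lambda>*(\<theta>+\<mu>)/D" "V0 = \<Lambda>*\<pi>/D" by (simp_all add: S0_def V0_def D_def)
    show ?thesis unfolding SV using D by (simp add: field_simps)
  qed
  also have "\<Lambda>*D + \<theta>*(\<Lambda>*\<pi>) - (\<pi>+\<mu>)*(\<Lambda>*(\<theta>+\<mu>)) = 0" by (simp add: D_def algebra_simps)
  finally show ?thesis by simp
qed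

lemma eq2: "\<pi>*S0 - (\<theta>+\<mu>)*V0 = 0"
  by (simp add: S0_def V0_def algebra_simps)

lemma f_dev:
  "f x $ 1 = \<eta>*(x$6) + \<theta>*(x$2 - V0) - (\<pi>+\<mu>)*(x$1 - S0) - b*(x$4) - \<beta>*(x$1 - S0)*(x$4)"
  "f x $ 2 = \<pi>*(x$1 - S0) - (\<theta>+\<mu>)*(x$2 - V0)"
  "f x $ 3 = b*(x$4) + \<beta>*(x$1 - S0)*(x$4) - (\<gamma>+\<mu>)*(x$3)"
  "f x $ 4 = \<gamma>*(x$3) - (\<delta>+\<tau>+\<mu>)*(x$4)"
  "f x $ 5 = \<delta>*(x$4) - (\<alpha>+\<omega>+\<mu>)*(x$5)"
  "f x $ 6 = \<alpha>*(x$5) - (\<eta>+\<mu>)*(x$6)"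
proof -
  have "f x $ 1 = (\<Lambda> + \<theta>*V0 - (\<pi>+\<mu>)*S0) + \<eta>*(x$6) + \<theta>*(x$2 - V0) - (\<pi>+\<mu>)*(x$1 - S0) - b*(x$4) - \<beta>*(x$1 - S0)*(x$4)"
    by (simp add: f_def sv_comp b_def algebra_simps)
  then show "f x $ 1 = \<eta>*(x$6) + \<theta>*(x$2 - V0) - (\<pi>+\<mu>)*(x$1 - S0) - b*(x$4) - \<beta>*(x$1 - S0)*(x$4)"
    using eq1 by simp
  have "f x $ 2 = (\<pi>*S0 - (\<theta>+\<mu>)*V0) + \<pi>*(x$1 - S0) - (\<theta>+\<mu>)*(x$2 - V0)"
    by (simp add: f_def sv_comp algebra_simps)
  then show "f x $ 2 = \<pi>*(x$1 - S0) - (\<theta>+\<mu>)*(x$2 - V0)" using eq2 by simp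
  show "f x $ 3 = b*(x$4) + \<beta>*(x$1 - S0)*(x$4) - (\<gamma>+\<mu>)*(x$3)"
    by (simp add: f_def sv_comp b_def algebra_simps)
qed (simp_all add: f_def sv_comp)

lemma Rv_eq: "Rv \<Lambda> \<beta> \<gamma> \<mu> \<pi> \<theta> \<delta> \<tau> = b*\<gamma>/((\<gamma>+\<mu>)*(\<delta>+\<tau>+\<mu>))"
  using pos by (simp add: Rv_def b_def S0_def field_simps)

lemma dist_comp: "\<bar>x$i - e$i\<bar> \<le> dist x e"
  using component_le_norm_cart[of "x - e" i] by (simp add: dist_norm)

lemma dist_sq: "(dist x e)^2 = (x$1 - S0)^2 + (x$2 - V0)^2 + (x$3)^2 + (x$4)^2 + (x$5)^2 + (x$6)^2"
  using norm6_sq[of "x - e"] by (simp add: dist_norm e_comp)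

lemma f_lip:
  assumes K0: "K \<ge> 0"
  shows "\<exists>L\<ge>0. \<forall>u w. (\<forall>i. \<bar>u$i\<bar> \<le> K) \<longrightarrow> (\<forall>i. \<bar>w$i\<bar> \<le> K) \<longrightarrow> norm (f u - f w) \<le> L * norm (u - w)"
proof -
  define c1 where "c1 = \<eta> + \<theta> + \<beta>*(2*K) + (\<pi>+\<mu>)"
  define c2 where "c2 = \<pi> + (\<theta>+\<mu>)"
  define c3 where "c3 = \<beta>*(2*K) + (\<gamma>+\<mu>)"
  define c4 where "c4 = \<gamma> + (\<delta>+\<tau>+\<mu>)"
  define c5 where "c5 = \<delta> + (\<alpha>+\<omega>+\<mu>)"
  define c6 where "c6 = \<alpha> + (\<eta>+\<mu>)"
  define L where "L = c1 + c2 + c3 + c4 + c5 + c6"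
  have L0: "L \<ge> 0" using pos K0 by (simp add: L_def c1_def c2_def c3_def c4_def c5_def c6_def)
  have main: "norm (f u - f w) \<le> L * norm (u - w)"
    if u: "\<forall>i. \<bar>u$i\<bar> \<le> K" and w: "\<forall>i. \<bar>w$i\<bar> \<le> K" for u w
  proof -
    define D where "D = norm (u - w)"
    have d: "\<bar>u$i - w$i\<bar> \<le> D" for i
      using component_le_norm_cart[of "u - w" i] by (simp add: D_def)
    have pr: "\<bar>u$1*u$4 - w$1*w$4\<bar> \<le> 2*K*D"
    proof -
      have "u$1*u$4 - w$1*w$4 = u$1*(u$4 - w$4) + w$4*(u$1 - w$1)" by (simp add: algebra_simps)
      moreover have "\<bar>u$1*(u$4 - w$4)\<bar> \<le> K*D" unfolding abs_mult
        using u d by (intro mult_mono) auto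
      moreover have "\<bar>w$4*(u$1 - w$1)\<bar> \<le> K*D" unfolding abs_mult
        using w d by (intro mult_mono) auto
      ultimately show ?thesis using abs_triangle_ineq[of "u$1*(u$4 - w$4)" "w$4*(u$1 - w$1)"] by linarith
    qed
    have b1: "\<bar>f u $ 1 - f w $ 1\<bar> \<le> c1*D"
    proof -
      have eq: "f u $ 1 - f w $ 1 = \<eta>*(u$6 - w$6) + \<theta>*(u$2 - w$2) - \<beta>*(u$1*u$4 - w$1*w$4) - (\<pi>+\<mu>)*(u$1 - w$1)"
        by (simp add: f_def sv_comp algebra_simps)
      have fs: "\<bar>\<eta>*(u$6 - w$6)\<bar> \<le> \<eta>*D" "\<bar>\<theta>*(u$2 - w$2)\<bar> \<le> \<theta>*D"
        "\<bar>\<beta>*(u$1*u$4 - w$1*w$4)\<bar> \<le> \<beta>*(2*K*D)" "\<bar>(\<pi>+\<mu>)*(u$1 - w$1)\<bar> \<le> (\<pi>+\<mu>)*D"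
        using pos d pr by (intro abs_lin; simp)+
      have cD: "c1*D = \<eta>*D + \<theta>*D + \<beta>*(2*K*D) + (\<pi>+\<mu>)*D" by (simp add: c1_def algebra_simps)
      show ?thesis unfolding eq using abs4[of "\<eta>*(u$6 - w$6)" "\<theta>*(u$2 - w$2)" "\<beta>*(u$1*u$4 - w$1*w$4)" "(\<pi>+\<mu>)*(u$1 - w$1)"] fs cD by linarith
    qed
    have b2: "\<bar>f u $ 2 - f w $ 2\<bar> \<le> c2*D"
    proof -
      have eq: "f u $ 2 - f w $ 2 = \<pi>*(u$1 - w$1) - (\<theta>+\<mu>)*(u$2 - w$2)"
        by (simp add: f_def sv_comp algebra_simps)
      have fs: "\<bar>\<pi>*(u$1 - w$1)\<bar> \<le> \<pi>*D" "\<bar>(\<theta>+\<mu>)*(u$2 - w$2)\<bar> \<le> (\<theta>+\<mu>)*D"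
        using pos d by (intro abs_lin; simp)+
      have cD: "c2*D = \<pi>*D + (\<theta>+\<mu>)*D" by (simp add: c2_def algebra_simps)
      show ?thesis unfolding eq using abs2[of "\<pi>*(u$1 - w$1)" "(\<theta>+\<mu>)*(u$2 - w$2)"] fs cD by linarith
    qed
    have b3: "\<bar>f u $ 3 - f w $ 3\<bar> \<le> c3*D"
    proof -
      have eq: "f u $ 3 - f w $ 3 = \<beta>*(u$1*u$4 - w$1*w$4) - (\<gamma>+\<mu>)*(u$3 - w$3)"
        by (simp add: f_def sv_comp algebra_simps)
      have fs: "\<bar>\<beta>*(u$1*u$4 - w$1*w$4)\<bar> \<le> \<beta>*(2*K*D)" "\<bar>(\<gamma>+\<mu>)*(u$3 - w$3)\<bar> \<le> (\<gamma>+\<mu>)*D"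
        using pos d pr by (intro abs_lin; simp)+
      have cD: "c3*D = \<beta>*(2*K*D) + (\<gamma>+\<mu>)*D" by (simp add: c3_def algebra_simps)
      show ?thesis unfolding eq using abs2[of "\<beta>*(u$1*u$4 - w$1*w$4)" "(\<gamma>+\<mu>)*(u$3 - w$3)"] fs cD by linarith
    qed
    have b4: "\<bar>f u $ 4 - f w $ 4\<bar> \<le> c4*D"
    proof -
      have eq: "f u $ 4 - f w $ 4 = \<gamma>*(u$3 - w$3) - (\<delta>+\<tau>+\<mu>)*(u$4 - w$4)"
        by (simp add: f_def sv_comp algebra_simps)
      have fs: "\<bar>\<gamma>*(u$3 - w$3)\<bar> \<le> \<gamma>*D" "\<bar>(\<delta>+\<tau>+\<mu>)*(u$4 - w$4)\<bar> \<le> (\<delta>+\<tau>+\<mu>)*D"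
        using pos d by (intro abs_lin; simp)+
      have cD: "c4*D = \<gamma>*D + (\<delta>+\<tau>+\<mu>)*D" by (simp add: c4_def algebra_simps)
      show ?thesis unfolding eq using abs2[of "\<gamma>*(u$3 - w$3)" "(\<delta>+\<tau>+\<mu>)*(u$4 - w$4)"] fs cD by linarith
    qed
    have b5: "\<bar>f u $ 5 - f w $ 5\<bar> \<le> c5*D"
    proof -
      have eq: "f u $ 5 - f w $ 5 = \<delta>*(u$4 - w$4) - (\<alpha>+\<omega>+\<mu>)*(u$5 - w$5)"
        by (simp add: f_def sv_comp algebra_simps)
      have fs: "\<bar>\<delta>*(u$4 - w$4)\<bar> \<le> \<delta>*D" "\<bar>(\<alpha>+\<omega>+\<mu>)*(u$5 - w$5)\<bar> \<le> (\<alpha>+\<omega>+\<mu>)*D"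
        using pos d by (intro abs_lin; simp)+
      have cD: "c5*D = \<delta>*D + (\<alpha>+\<omega>+\<mu>)*D" by (simp add: c5_def algebra_simps)
      show ?thesis unfolding eq using abs2[of "\<delta>*(u$4 - w$4)" "(\<alpha>+\<omega>+\<mu>)*(u$5 - w$5)"] fs cD by linarith
    qed
    have b6: "\<bar>f u $ 6 - f w $ 6\<bar> \<le> c6*D"
    proof -
      have eq: "f u $ 6 - f w $ 6 = \<alpha>*(u$5 - w$5) - (\<eta>+\<mu>)*(u$6 - w$6)"
        by (simp add: f_def sv_comp algebra_simps)
      have fs: "\<bar>\<alpha>*(u$5 - w$5)\<bar> \<le> \<alpha>*D" "\<bar>(\<eta>+\<mu>)*(u$6 - w$6)\<bar> \<le> (\<eta>+\<mu>)*D"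
        using pos d by (intro abs_lin; simp)+
      have cD: "c6*D = \<alpha>*D + (\<eta>+\<mu>)*D" by (simp add: c6_def algebra_simps)
      show ?thesis unfolding eq using abs2[of "\<alpha>*(u$5 - w$5)" "(\<eta>+\<mu>)*(u$6 - w$6)"] fs cD by linarith
    qed
    have "norm (f u - f w) \<le> (\<Sum>i\<in>UNIV. \<bar>(f u - f w)$i\<bar>)" by (rule norm_le_l1_cart)
    also have "... = \<bar>f u $ 1 - f w $ 1\<bar> + \<bar>f u $ 2 - f w $ 2\<bar> + \<bar>f u $ 3 - f w $ 3\<bar>
        + \<bar>f u $ 4 - f w $ 4\<bar> + \<bar>f u $ 5 - f w $ 5\<bar> + \<bar>f u $ 6 - f w $ 6\<bar>"
      by (simp add: sum_6)
    also have "... \<le> c1*D + c2*D + c3*D + c4*D + c5*D + c6*D"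
      using b1 b2 b3 b4 b5 b6 by linarith
    also have "... = L * norm (u - w)" by (simp add: L_def D_def algebra_simps)
    finally show ?thesis .
  qed
  show ?thesis using L0 main by blast
qed

end

context sv begin

lemma stable:
  assumes Rl: "Rv \<Lambda> \<beta> \<gamma> \<mu> \<pi> \<theta> \<delta> \<tau> < 1"
  shows "locally_asymptotically_stable f e"
proof -
  have ac: "(\<gamma>+\<mu>)*(\<delta>+\<tau>+\<mu>) > 0" using pos by simp
  have R: "b*\<gamma> < (\<gamma>+\<mu>)*(\<delta>+\<tau>+\<mu>)" using Rl ac unfolding Rv_eq by (simp add: divide_less_eq)
  have p: "\<gamma>+\<mu>>0" "\<delta>+\<tau>+\<mu>>0" "\<alpha>+\<omega>+\<mu>>0" "\<eta>+\<mu>>0" using pos by auto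
  obtain A B C r \<kappa> where ABC: "A>0" "B>0" "C>0" "r>0" "\<kappa>>0" and
    key: "\<forall>s v E I T R. \<bar>s\<bar> \<le> r \<longrightarrow> \<bar>I\<bar> \<le> r \<longrightarrow>
      A*(\<gamma>*E*(b*I + \<beta> * s*I - (\<gamma>+\<mu>)*E) + b*I*(\<gamma>*E - (\<delta>+\<tau>+\<mu>)*I)) + B*(T*(\<delta>*I - (\<alpha>+\<omega>+\<mu>)*T))
      + C*(R*(\<alpha>*T - (\<eta>+\<mu>)*R))
      + (\<pi> * s*(\<eta>*R + \<theta>* v - (\<pi>+\<mu>) * s - b*I - \<beta> * s*I) + \<theta>* v *(\<pi> * s - (\<theta>+\<mu>)* v))
      \<le> -\<kappa>*(s^2+v^2+E^2+I^2+T^2+R^2)"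
    using stab_alg[OF p(1) b_pos p(2) p(3) p(4) pos(3) pos(2) pos(6) pos(5) pos(7) pos(4) pos(8) pos(10) R]
    by blast
  define Vf where "Vf y = A*(\<gamma>*(y$3)^2 + b*(y$4)^2) + B*(y$5)^2 + C*(y$6)^2 + \<pi>*(y$1 - S0)^2 + \<theta>*(y$2 - V0)^2" for y :: "real^6"
  define Vd where "Vd y = 2*(A*(\<gamma>*(y$3)*(f y $ 3) + b*(y$4)*(f y $ 4)) + B*((y$5)*(f y $ 5)) + C*((y$6)*(f y $ 6))
      + (\<pi>*(y$1 - S0)*(f y $ 1) + \<theta>*(y$2 - V0)*(f y $ 2)))" for y :: "real^6"
  define M where "M = A*\<gamma> + A*b + B + C + \<pi> + \<theta>"
  define m0 where "m0 = min (min (A*\<gamma>) (A*b)) (min (min B C) (min \<pi> \<theta>))"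
  have M0: "M > 0" using ABC pos b_pos by (simp add: M_def add_pos_pos)
  have m00: "m0 > 0" using ABC pos b_pos by (simp add: m0_def)
  have m0M: "m0 \<le> M"
  proof -
    have "m0 \<le> \<pi>" by (simp add: m0_def)
    moreover have "\<pi> \<le> M" using ABC pos b_pos by (simp add: M_def)
    ultimately show ?thesis by simp
  qed
  have Vup: "Vf y \<le> M * (dist y e)^2" for y
  proof -
    have le: "p \<le> M" if "p \<in> {A*\<gamma>, A*b, B, C, \<pi>, \<theta>}" for p
      using that ABC pos b_pos by (auto simp: M_def)
    have "Vf y = (A*\<gamma>)*(y$3)^2 + (A*b)*(y$4)^2 + B*(y$5)^2 + C*(y$6)^2 + \<pi>*(y$1 - S0)^2 + \<theta>*(y$2 - V0)^2"
      by (simp add: Vf_def algebra_simps)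
    also have "... \<le> M*(y$3)^2 + M*(y$4)^2 + M*(y$5)^2 + M*(y$6)^2 + M*(y$1 - S0)^2 + M*(y$2 - V0)^2"
      by (intro add_mono mult_right_mono le) auto
    also have "... = M * (dist y e)^2" by (simp add: dist_sq algebra_simps)
    finally show ?thesis .
  qed
  have Vlow: "m0 * (dist y e)^2 \<le> Vf y" for y
  proof -
    have le: "m0 \<le> p" if "p \<in> {A*\<gamma>, A*b, B, C, \<pi>, \<theta>}" for p
      using that by (auto simp: m0_def)
    have "m0 * (dist y e)^2 = m0*(y$3)^2 + m0*(y$4)^2 + m0*(y$5)^2 + m0*(y$6)^2 + m0*(y$1 - S0)^2 + m0*(y$2 - V0)^2"
      by (simp add: dist_sq algebra_simps)
    also have "... \<le> (A*\<gamma>)*(y$3)^2 + (A*b)*(y$4)^2 + B*(y$5)^2 + C*(y$6)^2 + \<pi>*(y$1 - S0)^2 + \<theta>*(y$2 - V0)^2"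
      by (intro add_mono mult_right_mono le) auto
    also have "... = Vf y" by (simp add: Vf_def algebra_simps)
    finally show ?thesis .
  qed
  have Vder: "((\<lambda>t. Vf (x t)) has_real_derivative Vd (x t)) (at t within J)"
    if xd: "(x has_vector_derivative f (x t)) (at t within J)" for x t J
  proof -
    note d = comp_deriv[OF xd]
    show ?thesis unfolding Vf_def Vd_def
      by (auto intro!: derivative_eq_intros d simp: algebra_simps power2_eq_square)
  qed
  have Vdneg: "Vd y \<le> -(2*\<kappa>) * (dist y e)^2" if "dist y e \<le> r" for y
  proof -
    have s: "\<bar>y$1 - S0\<bar> \<le> r" using dist_comp[of y 1] that by (simp add: e_comp)
    have I: "\<bar>y$4\<bar> \<le> r" using dist_comp[of y 4] that by (simp add: e_comp)
    have "Vd y = 2*(A*(\<gamma>*(y$3)*(b*(y$4) + \<beta> * (y$1 - S0)*(y$4) - (\<gamma>+\<mu>)*(y$3)) + b*(y$4)*(\<gamma>*(y$3) - (\<delta>+\<tau>+\<mu>)*(y$4)))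
      + B*((y$5)*(\<delta>*(y$4) - (\<alpha>+\<omega>+\<mu>)*(y$5))) + C*((y$6)*(\<alpha>*(y$5) - (\<eta>+\<mu>)*(y$6)))
      + (\<pi> * (y$1 - S0)*(\<eta>*(y$6) + \<theta>* (y$2 - V0) - (\<pi>+\<mu>) * (y$1 - S0) - b*(y$4) - \<beta> * (y$1 - S0)*(y$4))
         + \<theta>* (y$2 - V0)*(\<pi> * (y$1 - S0) - (\<theta>+\<mu>)* (y$2 - V0))))"
      by (simp add: Vd_def f_dev)
    also have "... \<le> 2*(-\<kappa>*((y$1 - S0)^2+(y$2 - V0)^2+(y$3)^2+(y$4)^2+(y$5)^2+(y$6)^2))"
      by (rule mult_left_mono[OF key[rule_format, where s="y$1 - S0" and v="y$2 - V0" and E="y$3" and I="y$4" and T="y$5" and R="y$6", OF s I]]) simp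
    also have "... = -(2*\<kappa>) * (dist y e)^2" by (simp add: dist_sq)
    finally show ?thesis .
  qed
  have Vdle: "Vd y \<le> -(2*\<kappa>/M) * Vf y" if "dist y e \<le> r" for y
  proof -
    have "(2*\<kappa>/M) * Vf y \<le> (2*\<kappa>/M) * (M * (dist y e)^2)"
      using Vup ABC M0 by (intro mult_left_mono) auto
    also have "... = (2*\<kappa>) * (dist y e)^2" using M0 by simp
    finally show ?thesis using Vdneg[OF that] by simp
  qed
  have Vf_nn: "0 \<le> Vf y" for y
  proof -
    have "0 \<le> m0 * (dist y e)^2" using m00 by simp
    then show ?thesis using Vlow[of y] by linarith
  qed
  have bnd: "\<forall>t\<in>{0..T}. dist (x t) e < \<epsilon>1"
    if e1: "0 < \<epsilon>1" "\<epsilon>1 \<le> r" and T0: "T \<ge> 0" and sol: "ode_solution_on f x {0..T}"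
      and x0: "dist (x 0) e < m0*\<epsilon>1/M" for \<epsilon>1 T x
  proof -
    have der: "((\<lambda>t. Vf (x t)) has_real_derivative Vd (x t)) (at t within {0..T})" if "t \<in> {0..T}" for t
      using sol that by (intro Vder) (auto simp: ode_solution_on_def)
    define L where "L = m0*\<epsilon>1^2"
    have "Vf (x 0) \<le> M * (dist (x 0) e)^2" by (rule Vup)
    also have "... < M * (m0*\<epsilon>1/M)^2"
      using x0 M0 by (intro mult_strict_left_mono power_strict_mono) auto
    also have "... = m0 * (m0/M) * \<epsilon>1^2" using M0 by (simp add: power2_eq_square)
    also have "... \<le> m0 * 1 * \<epsilon>1^2" using m0M M0 m00 by (intro mult_right_mono mult_left_mono) auto
    finally have V0L: "Vf (x 0) < L" by (simp add: L_def)
    have "\<forall>t\<in>{0..T}. Vf (x t) < L"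
    proof (rule stay_in[OF deriv_cont_on[OF der] V0L])
      fix t assume t: "t \<in> {0..T}" and le: "\<forall>s\<in>{0..t}. Vf (x s) \<le> L"
      have "Vf (x 0) \<ge> Vf (x t)"
      proof -
        have "(\<lambda>s. - Vf (x s)) 0 \<le> (\<lambda>s. - Vf (x s)) t"
        proof (rule mono_deriv[where h="\<lambda>s. - Vf (x s)" and a=0 and b=t and h'="\<lambda>s. - Vd (x s)"])
          show "0 \<le> t" using t by simp
          fix s assume s: "s \<in> {0..t}"
          then have sT: "s \<in> {0..T}" using t by auto
          show "((\<lambda>s. - Vf (x s)) has_real_derivative - Vd (x s)) (at s within {0..t})"
            using has_field_derivative_subset[OF der[OF sT], of "{0..t}"] t
            by (auto intro!: derivative_eq_intros)
          have "m0 * (dist (x s) e)^2 \<le> m0 * \<epsilon>1^2" using order_trans[OF Vlow[of "x s"] le[rule_format, OF s]] by (simp add: L_def)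
          then have "(dist (x s) e)^2 \<le> \<epsilon>1^2" using m00 by simp
          then have "dist (x s) e \<le> \<epsilon>1" using e1 by (simp add: power2_le_iff_abs_le)
          then have "dist (x s) e \<le> r" using e1 by simp
          moreover have "0 \<le> (2*\<kappa>/M) * Vf (x s)" using Vf_nn[of "x s"] M0 ABC by simp
          ultimately have "Vd (x s) \<le> 0" using Vdle[of "x s"] by linarith
          then show "- Vd (x s) \<ge> 0" by simp
        qed
        then show ?thesis by simp
      qed
      then show "Vf (x t) < L" using V0L by simp
    qed
    then show ?thesis
    proof (intro ballI)
      fix t assume A: "\<forall>t\<in>{0..T}. Vf (x t) < L" and tt: "t \<in> {0..T}"
      have "m0 * (dist (x t) e)^2 < m0 * \<epsilon>1^2"
        using order_le_less_trans[OF Vlow[of "x t"] A[rule_format, OF tt]] by (simp add: L_def)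
      then have "(dist (x t) e)^2 < \<epsilon>1^2" using m00 by simp
      then show "dist (x t) e < \<epsilon>1" using e1 power2_less_imp_less by fastforce
    qed
  qed
  have lyap: "lyapunov_stable f e"
    unfolding lyapunov_stable_def
  proof (intro allI impI)
    fix \<epsilon> :: real assume "\<epsilon> > 0"
    define \<epsilon>1 where "\<epsilon>1 = min \<epsilon> r"
    have e1: "0 < \<epsilon>1" "\<epsilon>1 \<le> r" "\<epsilon>1 \<le> \<epsilon>" using \<open>\<epsilon> > 0\<close> ABC by (auto simp: \<epsilon>1_def)
    show "\<exists>\<delta>>0. \<forall>x T. T \<ge> 0 \<and> ode_solution_on f x {0..T} \<and> dist (x 0) e < \<delta> \<longrightarrow> (\<forall>t\<in>{0..T}. dist (x t) e < \<epsilon>)"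
    proof (intro exI conjI allI impI)
      show "m0*\<epsilon>1/M > 0" using m00 M0 e1 by simp
      fix x T assume H: "T \<ge> 0 \<and> ode_solution_on f x {0..T} \<and> dist (x 0) e < m0*\<epsilon>1/M"
      from H have H1: "T \<ge> 0" "ode_solution_on f x {0..T}" "dist (x 0) e < m0*\<epsilon>1/M" by auto
      have "\<forall>t\<in>{0..T}. dist (x t) e < \<epsilon>1" by (rule bnd[OF e1(1,2) H1])
      then show "\<forall>t\<in>{0..T}. dist (x t) e < \<epsilon>" using e1(3) by force
    qed
  qed
  have attr: "locally_attractive f e"
    unfolding locally_attractive_def
  proof (intro exI conjI allI impI)
    show "m0*r/M > 0" using m00 M0 ABC by simp
    fix x assume H: "ode_solution_on f x {0..} \<and> dist (x 0) e < m0*r/M"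
    define c where "c = 2*\<kappa>/M"
    have c0: "c > 0" using ABC M0 by (simp add: c_def)
    have solT: "ode_solution_on f x {0..T}" for T
      using H unfolding ode_solution_on_def
      by (auto intro: has_vector_derivative_within_subset[of _ _ _ "{0..}"])
    have inr: "dist (x t) e < r" if "t \<ge> 0" for t
    proof -
      have "\<forall>t\<in>{0..t}. dist (x t) e < r" using H by (intro bnd[OF ABC(4) order_refl that solT]) auto
      then show ?thesis using that by auto
    qed
    have dec: "Vf (x t) \<le> Vf (x 0) * exp (-(c*t))" if t: "t \<ge> 0" for t
    proof -
      have "(\<lambda>s. - (Vf (x s) * exp (c* s))) 0 \<le> (\<lambda>s. - (Vf (x s) * exp (c* s))) t"
      proof (rule mono_deriv[where h="\<lambda>s. - (Vf (x s) * exp (c* s))" and a=0 and b=t and h'="\<lambda>s. - (Vd (x s) * exp (c* s) + Vf (x s) * (exp (c* s) * c))"])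
        show "0 \<le> t" by (rule t)
        fix s assume s: "s \<in> {0..t}"
        have "((\<lambda>s. Vf (x s)) has_real_derivative Vd (x s)) (at s within {0..t})"
          using solT[of t] s by (intro Vder) (auto simp: ode_solution_on_def)
        then show "((\<lambda>s. - (Vf (x s) * exp (c* s))) has_real_derivative
            - (Vd (x s) * exp (c* s) + Vf (x s) * (exp (c* s) * c))) (at s within {0..t})"
          by (auto intro!: derivative_eq_intros)
        have "Vd (x s) \<le> -c * Vf (x s)" using Vdle[of "x s"] inr[of s] s by (simp add: c_def)
        then have "Vd (x s) + c * Vf (x s) \<le> 0" by simp
        then have "(Vd (x s) + c * Vf (x s)) * exp (c* s) \<le> 0" by (simp add: mult_nonpos_nonneg)
        then show "- (Vd (x s) * exp (c* s) + Vf (x s) * (exp (c* s) * c)) \<ge> 0" by (simp add: algebra_simps)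
      qed
      then have "Vf (x t) * exp (c*t) \<le> Vf (x 0)" by simp
      then have "Vf (x t) * exp (c*t) * exp (-(c*t)) \<le> Vf (x 0) * exp (-(c*t))"
        by (intro mult_right_mono) auto
      moreover have "exp (c*t) * exp (-(c*t)) = 1" by (simp add: exp_minus_inverse)
      then have "Vf (x t) * exp (c*t) * exp (-(c*t)) = Vf (x t)" by (metis mult.assoc mult.right_neutral)
      ultimately show ?thesis by simp
    qed
    have "((\<lambda>t. exp (-(c*t))) \<longlongrightarrow> 0) at_top"
      using c0 by real_asymp
    then have "((\<lambda>t. (Vf (x 0) / m0) * exp (-(c*t))) \<longlongrightarrow> 0) at_top"
      by (rule tendsto_mult_right_zero)
    moreover have "(\<lambda>t. (Vf (x 0) / m0) * exp (-(c*t))) = (\<lambda>t. Vf (x 0) * exp (-(c*t)) / m0)"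
      by (auto simp: fun_eq_iff)
    ultimately have lim: "((\<lambda>t. Vf (x 0) * exp (-(c*t)) / m0) \<longlongrightarrow> 0) at_top" by simp
    show "(x \<longlongrightarrow> e) at_top"
    proof (rule tendstoI)
      fix \<epsilon> :: real assume "\<epsilon> > 0"
      then have "\<forall>\<^sub>F t in at_top. Vf (x 0) * exp (-(c*t)) / m0 < \<epsilon>^2"
        using order_tendstoD(2)[OF lim] by simp
      moreover have "\<forall>\<^sub>F t in at_top. t \<ge> (0::real)" by (rule eventually_ge_at_top)
      ultimately show "\<forall>\<^sub>F t in at_top. dist (x t) e < \<epsilon>"
      proof eventually_elim
        case (elim t)
        have "m0 * (dist (x t) e)^2 \<le> Vf (x 0) * exp (-(c*t))" using Vlow[of "x t"] dec[OF elim(2)] by linarith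
        then have "(dist (x t) e)^2 \<le> Vf (x 0) * exp (-(c*t)) / m0" using m00 by (simp add: pos_le_divide_eq mult.commute)
        then have "(dist (x t) e)^2 < \<epsilon>^2" using elim(1) by linarith
        then show ?case using \<open>\<epsilon> > 0\<close> power2_less_imp_less by fastforce
      qed
    qed
  qed
  show ?thesis unfolding locally_asymptotically_stable_def using lyap attr by simp
qed

end

context sv begin

lemma unstable:
  assumes Rg: "Rv \<Lambda> \<beta> \<gamma> \<mu> \<pi> \<theta> \<delta> \<tau> > 1"
  shows "unstable_equilibrium f e"
  unfolding unstable_equilibrium_def
proof
  assume stab: "lyapunov_stable f e"
  have ac: "(\<gamma>+\<mu>)*(\<delta>+\<tau>+\<mu>) > 0" using pos by simp
  have R: "(\<gamma>+\<mu>)*(\<delta>+\<tau>+\<mu>) < b*\<gamma>" using Rg ac unfolding Rv_eq by (simp add: less_divide_eq)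
  have p: "\<gamma>+\<mu>>0" "\<delta>+\<tau>+\<mu>>0" using pos by auto
  obtain xw z r \<kappa> C where X: "xw > 0" "r > 0" "\<kappa> > 0" "C > 0" and
    Wk: "\<forall>s E I. \<bar>s\<bar> \<le> r \<longrightarrow>
       (let Wd = 2*xw*E*(b*I + \<beta>* s*I - (\<gamma>+\<mu>)*E) + 2*((b*I + \<beta>* s*I - (\<gamma>+\<mu>)*E)*I + E*(\<gamma>*E - (\<delta>+\<tau>+\<mu>)*I)) + 2*z*I*(\<gamma>*E - (\<delta>+\<tau>+\<mu>)*I)
        in 0 \<le> Wd \<and> \<kappa>*(xw*E^2 + 2*E*I + z*I^2) \<le> Wd)" and
    Wb: "\<forall>E I. xw*E^2 + 2*E*I + z*I^2 \<le> C*(E^2+I^2)"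
    using inst_alg[OF p(1) b_pos p(2) pos(3) pos(2) R] by blast
  define W where "W y = xw*(y$3)^2 + 2*(y$3)*(y$4) + z*(y$4)^2" for y :: "real^6"
  define Wd where "Wd y = 2*xw*(y$3)*(f y $ 3) + 2*((f y $ 3)*(y$4) + (y$3)*(f y $ 4)) + 2*z*(y$4)*(f y $ 4)" for y :: "real^6"
  have Wder: "((\<lambda>t. W (x t)) has_real_derivative Wd (x t)) (at t within J)"
    if xd: "(x has_vector_derivative f (x t)) (at t within J)" for x t J
  proof -
    note d = comp_deriv[OF xd]
    show ?thesis unfolding W_def Wd_def
      by (auto intro!: derivative_eq_intros d simp: algebra_simps power2_eq_square)
  qed
  have Wdk: "0 \<le> Wd y \<and> \<kappa> * W y \<le> Wd y" if "dist y e \<le> r" for y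
  proof -
    have s: "\<bar>y$1 - S0\<bar> \<le> r" using dist_comp[of y 1] that by (simp add: e_comp)
    have "Wd y = 2*xw*(y$3)*(b*(y$4) + \<beta>* (y$1 - S0)*(y$4) - (\<gamma>+\<mu>)*(y$3))
        + 2*((b*(y$4) + \<beta>* (y$1 - S0)*(y$4) - (\<gamma>+\<mu>)*(y$3))*(y$4) + (y$3)*(\<gamma>*(y$3) - (\<delta>+\<tau>+\<mu>)*(y$4)))
        + 2*z*(y$4)*(\<gamma>*(y$3) - (\<delta>+\<tau>+\<mu>)*(y$4))"
      by (simp add: Wd_def f_dev)
    then show ?thesis
      using Wk[rule_format, where s="y$1 - S0" and E="y$3" and I="y$4", OF s] by (simp add: W_def Let_def)
  qed
  define \<epsilon>' where "\<epsilon>' = r/2"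
  have e'0: "\<epsilon>' > 0" "\<epsilon>' < r" using X by (auto simp: \<epsilon>'_def)
  obtain \<delta>0 where d0: "\<delta>0 > 0" and
    stp: "\<And>x T. T \<ge> 0 \<Longrightarrow> ode_solution_on f x {0..T} \<Longrightarrow> dist (x 0) e < \<delta>0 \<Longrightarrow> \<forall>t\<in>{0..T}. dist (x t) e < \<epsilon>'"
    using stab e'0(1) unfolding lyapunov_stable_def by meson
  define \<delta>1 where "\<delta>1 = min \<delta>0 \<epsilon>'"
  have d1: "\<delta>1 > 0" "\<delta>1 \<le> \<delta>0" "\<delta>1 \<le> \<epsilon>'" using d0 e'0 by (auto simp: \<delta>1_def)
  define pv :: "real^6" where "pv = (\<chi> i. if i = 3 then \<delta>1/2 else 0)"
  define p where "p = e + pv"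
  have pv3: "pv$3 = \<delta>1/2" and pv4: "pv$4 = 0" by (simp_all add: pv_def)
  have dp: "dist p e < \<delta>1"
  proof -
    have "dist p e = norm pv" by (simp add: p_def dist_norm)
    also have "... \<le> (\<Sum>i\<in>UNIV. \<bar>pv$i\<bar>)" by (rule norm_le_l1_cart)
    also have "... = \<delta>1/2" using d1 by (simp add: sum_6 pv_def)
    finally show ?thesis using d1 by simp
  qed
  define W0 where "W0 = W p"
  have W0: "W0 = xw*(\<delta>1/2)^2" by (simp add: W0_def W_def p_def e_comp pv3 pv4)
  have W00: "W0 > 0" using X d1 by (simp add: W0)
  define Pr :: "real^6 \<Rightarrow> real^6" where "Pr v = (\<chi> i. max (e$i - r) (min (e$i + r) (v$i)))" for v
  define g where "g v = f (Pr v)" for v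
  define K where "K = S0 + V0 + r"
  have eK: "\<bar>e$i\<bar> \<le> S0 + V0" for i
    using exhaust_6[of i] S0_pos V0_pos by (auto simp: e_comp)
  have PrK: "\<bar>Pr v $ i\<bar> \<le> K" for v i
    using eK[of i] X(2) by (auto simp: Pr_def K_def abs_le_iff)
  have Prlip: "norm (Pr u - Pr w) \<le> norm (u - w)" for u w
    by (rule norm_le_componentwise_cart) (auto simp: Pr_def abs_le_iff max_def min_def)
  have Prid: "Pr v = v" if "dist v e < r" for v
  proof -
    have "\<bar>v$i - e$i\<bar> < r" for i using dist_comp[of v i] that by linarith
    then have "max (e$i - r) (min (e$i + r) (v$i)) = v$i" for i
      using abs_less_iff[of "v$i - e$i" r] by (auto simp: max_def min_def)
    then show ?thesis by (simp add: Pr_def vec_eq_iff)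
  qed
  obtain L where L0: "L \<ge> 0" and Lf: "\<And>u w. (\<forall>i. \<bar>u$i\<bar> \<le> K) \<Longrightarrow> (\<forall>i. \<bar>w$i\<bar> \<le> K) \<Longrightarrow> norm (f u - f w) \<le> L * norm (u - w)"
    using f_lip[of K] S0_pos V0_pos X by (auto simp: K_def)
  have glip: "norm (g u - g w) \<le> L * norm (u - w)" for u w
  proof -
    have "norm (g u - g w) \<le> L * norm (Pr u - Pr w)" unfolding g_def using PrK by (intro Lf) auto
    also have "... \<le> L * norm (u - w)" using L0 Prlip by (intro mult_left_mono) auto
    finally show ?thesis .
  qed
  define T where "T = 2*C*\<epsilon>'^2/(\<kappa>*W0) + 1"
  have T0: "T \<ge> 0" using X W00 by (simp add: T_def)
  obtain y where y0: "y 0 = p" and ysol: "\<forall>t\<in>{0..T}. (y has_vector_derivative g (y t)) (at t within {0..T})"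
    using ode_exists[OF glip L0 T0, of p] by blast
  have ycont: "continuous_on {0..T} y"
    unfolding continuous_on_eq_continuous_within
  proof
    fix t assume "t \<in> {0..T}"
    then show "continuous (at t within {0..T}) y" using ysol by (blast intro: has_vector_derivative_continuous)
  qed
  have fsol: "(y has_vector_derivative f (y s)) (at s within {0..t})"
    if t: "t \<in> {0..T}" and s: "s \<in> {0..t}" and near: "dist (y s) e \<le> \<epsilon>'" for s t
  proof -
    have "g (y s) = f (y s)" using Prid[of "y s"] near e'0 by (simp add: g_def)
    moreover have "(y has_vector_derivative g (y s)) (at s within {0..t})"
    proof (rule has_vector_derivative_within_subset[of _ _ _ "{0..T}"])
      have "s \<in> {0..T}" using s t by auto
      then show "(y has_vector_derivative g (y s)) (at s within {0..T})" using ysol by blast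
      show "{0..t} \<subseteq> {0..T}" using t by auto
    qed
    ultimately show ?thesis by simp
  qed
  have stay: "\<forall>t\<in>{0..T}. dist (y t) e < \<epsilon>'"
  proof (rule stay_in)
    show "continuous_on {0..T} (\<lambda>t. dist (y t) e)" by (intro continuous_intros ycont)
    show "dist (y 0) e < \<epsilon>'" using dp d1 y0 by simp
    fix t assume t: "t \<in> {0..T}" and le: "\<forall>s\<in>{0..t}. dist (y s) e \<le> \<epsilon>'"
    have "ode_solution_on f y {0..t}"
      unfolding ode_solution_on_def using fsol[OF t] le by blast
    moreover have "dist (y 0) e < \<delta>0" using dp d1 y0 by simp
    ultimately have "\<forall>s\<in>{0..t}. dist (y s) e < \<epsilon>'" using stp[of t y] t by auto
    then show "dist (y t) e < \<epsilon>'" using t by auto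
  qed
  have yder: "((\<lambda>s. W (y s)) has_real_derivative Wd (y s)) (at s within {0..t})"
    if t: "t \<in> {0..T}" and s: "s \<in> {0..t}" for s t
  proof -
    have "s \<in> {0..T}" using s t by auto
    then have "dist (y s) e \<le> \<epsilon>'" using stay by (auto intro: less_imp_le)
    then show ?thesis by (intro Wder fsol[OF t s])
  qed
  have Wdy: "0 \<le> Wd (y s) \<and> \<kappa> * W (y s) \<le> Wd (y s)" if "s \<in> {0..T}" for s
  proof (rule Wdk)
    have "dist (y s) e < \<epsilon>'" using stay that by blast
    then show "dist (y s) e \<le> r" using e'0 by linarith
  qed
  have step1: "W0 \<le> W (y t)" if t: "t \<in> {0..T}" for t
  proof -
    have "(\<lambda>s. W (y s)) 0 \<le> (\<lambda>s. W (y s)) t"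
    proof (rule mono_deriv[where h="\<lambda>s. W (y s)" and a=0 and b=t and h'="\<lambda>s. Wd (y s)"])
      show "0 \<le> t" using t by simp
      fix s assume s: "s \<in> {0..t}"
      show "((\<lambda>s. W (y s)) has_real_derivative Wd (y s)) (at s within {0..t})" by (rule yder[OF t s])
      show "0 \<le> Wd (y s)" using Wdy[of s] s t by auto
    qed
    then show ?thesis by (simp add: W0_def y0)
  qed
  have step2: "W0 + \<kappa>*W0*T \<le> W (y T)"
  proof -
    have TT: "T \<in> {0..T}" using T0 by simp
    have "(\<lambda>s. W (y s) - \<kappa>*W0* s) 0 \<le> (\<lambda>s. W (y s) - \<kappa>*W0* s) T"
    proof (rule mono_deriv[where h="\<lambda>s. W (y s) - \<kappa>*W0* s" and a=0 and b=T and h'="\<lambda>s. Wd (y s) - \<kappa>*W0"])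
      show "0 \<le> T" by (rule T0)
      fix s assume s: "s \<in> {0..T}"
      show "((\<lambda>s. W (y s) - \<kappa>*W0* s) has_real_derivative Wd (y s) - \<kappa>*W0) (at s within {0..T})"
        using yder[OF TT s] by (auto intro!: derivative_eq_intros)
      have "\<kappa>*W0 \<le> \<kappa> * W (y s)" using step1[OF s] X by (intro mult_left_mono) auto
      then show "0 \<le> Wd (y s) - \<kappa>*W0" using Wdy[OF s] by linarith
    qed
    then show ?thesis by (simp add: W0_def y0)
  qed
  have bound: "W (y T) \<le> C*(2*\<epsilon>'^2)"
  proof -
    have TT: "T \<in> {0..T}" using T0 by simp
    have dT: "dist (y T) e < \<epsilon>'" using stay TT by blast
    have "\<bar>y T $ 3\<bar> \<le> \<epsilon>'" "\<bar>y T $ 4\<bar> \<le> \<epsilon>'"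
      using dist_comp[of "y T" 3] dist_comp[of "y T" 4] dT by (auto simp: e_comp)
    then have "\<bar>y T $ 3\<bar>^2 \<le> \<epsilon>'^2" "\<bar>y T $ 4\<bar>^2 \<le> \<epsilon>'^2"
      by (simp_all only: power_mono[OF _ abs_ge_zero])
    then have "(y T $ 3)^2 \<le> \<epsilon>'^2" "(y T $ 4)^2 \<le> \<epsilon>'^2" by simp_all
    then have "(y T $ 3)^2 + (y T $ 4)^2 \<le> 2*\<epsilon>'^2" by simp
    then have "C*((y T $ 3)^2 + (y T $ 4)^2) \<le> C*(2*\<epsilon>'^2)" using X by (intro mult_left_mono) auto
    moreover have "W (y T) \<le> C*((y T $ 3)^2 + (y T $ 4)^2)" using Wb by (simp add: W_def)
    ultimately show ?thesis by linarith
  qed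
  have nz: "\<kappa>*W0 \<noteq> 0" using X W00 by simp
  have "\<kappa>*W0*T = \<kappa>*W0*(2*C*\<epsilon>'^2/(\<kappa>*W0)) + \<kappa>*W0" by (simp add: T_def distrib_left)
  also have "\<kappa>*W0*(2*C*\<epsilon>'^2/(\<kappa>*W0)) = 2*C*\<epsilon>'^2" using nz by simp
  finally have eqT: "\<kappa>*W0*T = 2*C*\<epsilon>'^2 + \<kappa>*W0" .
  have kw: "0 < \<kappa>*W0" using X W00 by simp
  have "C*(2*\<epsilon>'^2) = 2*C*\<epsilon>'^2" by simp
  then show False using step2 bound W00 kw eqT by linarith
qed

end

theorem theorem3:
  fixes \<Lambda> \<beta> \<gamma> \<mu> \<pi> \<eta> \<theta> \<delta> \<tau> \<alpha> \<omega> :: real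
  assumes "\<Lambda> > 0" "\<beta> > 0" "\<gamma> > 0" "\<mu> > 0" "\<pi> > 0" "\<eta> > 0" "\<theta> > 0"
          "\<delta> > 0" "\<tau> > 0" "\<alpha> > 0" "\<omega> > 0"
  shows "(Rv \<Lambda> \<beta> \<gamma> \<mu> \<pi> \<theta> \<delta> \<tau> < 1 \<longrightarrow>
            locally_asymptotically_stable (sveitrs \<Lambda> \<beta> \<gamma> \<mu> \<pi> \<eta> \<theta> \<delta> \<tau> \<alpha> \<omega>) (dfe \<Lambda> \<mu> \<pi> \<theta>))
       \<and> (Rv \<Lambda> \<beta> \<gamma> \<mu> \<pi> \<theta> \<delta> \<tau> > 1 \<longrightarrow>
            unstable_equilibrium (sveitrs \<Lambda> \<beta> \<gamma> \<mu> \<pi> \<eta> \<theta> \<delta> \<tau> \<alpha> \<omega>) (dfe \<Lambda> \<mu> \<pi> \<theta>))"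
proof -
  interpret sv \<Lambda> \<beta> \<gamma> \<mu> \<pi> \<eta> \<theta> \<delta> \<tau> \<alpha> \<omega> using assms by unfold_locales
  show ?thesis using stable unstable unfolding f_def e_def by blast
qed

end
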